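(* Let $q$ be a prime power, $n\ge1$, let $f(x)\in\mathbb{F}_{q^n}[x]$ be a permutation polynomial of $\mathbb{F}_{q^n}$, and let $m_1,\dots,m_n$ be positive integers. For $a_1,\dots,a_n,v_1,\dots,v_n\in\mathbb{F}_{q^n}$, the polynomial $$F(x)=a_1(\mathrm{Tr}(v_1f(x)))^{m_1}+\dots+a_n(\mathrm{Tr}(v_nf(x)))^{m_n}$$ is a permutation polynomial of $\mathbb{F}_{q^n}$ if and only if $\gcd(m_1m_2\cdots m_n,q-1)=1$ and both $\{a_1,\dots,a_n\}$ and $\{v_1,\dots,v_n\}$ are bases of $\mathbb{F}_{q^n}$ over $\mathbb{F}_q$.
   Context: $\mathrm{Tr}(x)=x+x^q+\dots+x^{q^{n-1}}$ is the trace from $\mathbb{F}_{q^n}$ to $\mathbb{F}_q$. A polynomial is a permutation polynomial of a finite field if the map it induces on that field is bijective. *)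

theory Defs
  imports "HOL-Number_Theory.Number_Theory" "HOL-Computational_Algebra.Polynomial"
begin

text \<open>The field of order q^n is modelled as a finite field type 'a with CARD('a) = q^n.
  Its subfield F_q is the set of fixed points of x \<mapsto> x^q.\<close>

definition subfield_Fq :: "nat \<Rightarrow> 'a::field set" where
  "subfield_Fq q = {x. x ^ q = x}"

definition trace_Fq :: "nat \<Rightarrow> nat \<Rightarrow> 'a::field \<Rightarrow> 'a" where
  "trace_Fq q n x = (\<Sum>i<n. x ^ (q ^ i))"

definition lin_indep_over :: "'a::field set \<Rightarrow> 'a set \<Rightarrow> bool" where
  "lin_indep_over K B \<longleftrightarrow>
     (\<forall>S c. finite S \<and> S \<subseteq> B \<and> (\<forall>s\<in>S. c s \<in> K) \<and> (\<Sum>s\<in>S. c s * s) = 0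
        \<longrightarrow> (\<forall>s\<in>S. c s = 0))"

definition spans_over :: "'a::field set \<Rightarrow> 'a set \<Rightarrow> bool" where
  "spans_over K B \<longleftrightarrow>
     (\<forall>y. \<exists>S c. finite S \<and> S \<subseteq> B \<and> (\<forall>s\<in>S. c s \<in> K) \<and> y = (\<Sum>s\<in>S. c s * s))"

definition is_basis_over :: "'a::field set \<Rightarrow> 'a set \<Rightarrow> bool" where
  "is_basis_over K B \<longleftrightarrow> lin_indep_over K B \<and> spans_over K B"

end

theory Submission
  imports Defs
begin


lemma field_pow_card:
  fixes x :: "'a :: {field,finite}"
  shows "x ^ card (UNIV :: 'a set) = x"
proof (cases "x = 0")
  case False
  have "x * (\<Prod>y\<in>UNIV-{0}. x * y) = x * x ^ (card (UNIV :: 'a set) - 1) * \<Prod>(UNIV-{0})"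
    by (simp add: prod.distrib mult_ac)
  also have "x * x ^ (card (UNIV :: 'a set) - 1) = x ^ Suc (card (UNIV :: 'a set) - 1)"
    by (subst power_Suc) auto
  also have "Suc (card (UNIV :: 'a set) - 1) = card (UNIV :: 'a set)"
    using finite_UNIV_card_ge_0[where ?'a = 'a] by simp
  also have "(\<Prod>y\<in>UNIV-{0}. x * y) = (\<Prod>y\<in>UNIV-{0}. y)"
    by (rule prod.reindex_bij_witness[of _ "\<lambda>y. y / x" "\<lambda>y. x * y"]) (use False in auto)
  finally show ?thesis
    by simp
qed (use finite_UNIV_card_ge_0[where ?'a = 'a] in auto)

lemma bij_by_card:
  assumes "finite B" "inj_on g A" "g ` A \<subseteq> B" "card A = card B"
  shows "bij_betw g A B"
  using assms by (metis bij_betw_def card_image card_subset_eq)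

lemma bij_by_card2:
  assumes "finite A" "g ` A = B" "card A = card B"
  shows "bij_betw g A B"
  using assms by (simp add: bij_betw_def eq_card_imp_inj_on)

lemma roots_lower:
  fixes S :: "'a :: field set"
  assumes "d \<ge> 1" "e \<ge> 1" "finite S" "\<forall>x\<in>S. x ^ (d*e) = 1" "card S = d*e"
  shows "card {x\<in>S. x ^ d = 1} \<ge> d"
proof -
  define h :: "'a poly" where "h = (\<Sum>i<e. monom 1 (d*i))"
  have ph: "poly h x = (\<Sum>i<e. (x^d)^i)" for x
    by (simp add: h_def poly_sum poly_monom power_mult)
  have ch: "coeff h j = (\<Sum>i<e. if d*i = j then 1 else 0)" for j
    by (simp add: h_def coeff_sum)
  have "coeff h 0 = 1"
  proof -
    have "coeff h 0 = (\<Sum>i\<in>{0}. if d*i = 0 then (1::'a) else 0)"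
      unfolding ch using assms(1,2) by (intro sum.mono_neutral_right) auto
    thus ?thesis by simp
  qed
  hence h0: "h \<noteq> 0" by auto
  have dh: "degree h \<le> d*(e-1)"
  proof (rule degree_le, intro allI impI)
    fix j assume j: "d*(e-1) < j"
    have "\<forall>i<e. d*i \<noteq> j"
    proof (intro allI impI)
      fix i assume "i < e"
      hence "d*i \<le> d*(e-1)" by (intro mult_le_mono2) linarith
      thus "d*i \<noteq> j" using j by linarith
    qed
    thus "coeff h j = 0" unfolding ch by simp
  qed
  have sub: "S \<subseteq> {x\<in>S. x ^ d = 1} \<union> {x. poly h x = 0}"
  proof
    fix x assume x: "x \<in> S"
    have "(x^d)^e - 1 = (x^d - 1) * (\<Sum>i<e. (x^d)^i)" by (rule power_diff_1_eq)
    hence "(x^d - 1) * poly h x = 0" using assms(4) x by (simp add: ph power_mult)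
    thus "x \<in> {x\<in>S. x ^ d = 1} \<union> {x. poly h x = 0}" using x by auto
  qed
  have "d*e \<le> card ({x\<in>S. x ^ d = 1} \<union> {x. poly h x = 0})"
    using assms(5) card_mono[OF _ sub] assms(3) poly_roots_finite[OF h0] by auto
  also have "\<dots> \<le> card {x\<in>S. x ^ d = 1} + card {x. poly h x = 0}" by (rule card_Un_le)
  also have "\<dots> \<le> card {x\<in>S. x ^ d = 1} + d*(e-1)"
    using card_poly_roots_bound[OF h0] dh by linarith
  finally have "d*e \<le> card {x\<in>S. x ^ d = 1} + d*(e-1)" .
  moreover have "d*e = d*(e-1) + d" using assms(2)
    by (metis add.commute le_add_diff_inverse mult.commute mult_Suc plus_1_eq_Suc)
  ultimately show ?thesis by linarith
qed



context
  fixes q n :: nat and ty :: "'a :: {field,finite} itself"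
  assumes pp: "primepow q" and n1: "n \<ge> 1" and cardA: "card (UNIV :: 'a set) = q ^ n"
begin

lemma q2: "q \<ge> 2"
  using pp unfolding primepow_def
proof -
  obtain r k where r: "prime r" "k > 0" "q = r ^ k" using pp unfolding primepow_def by blast
  have "r \<ge> 2" using r(1) prime_ge_2_nat by blast
  moreover have "r \<le> r ^ k" using r(2) \<open>r\<ge>2\<close> by (simp add: self_le_power)
  ultimately show ?thesis using r(3) by linarith
qed

lemma frob: "((x::'a) + y) ^ q = x ^ q + y ^ q"
proof -
  obtain r k where r: "prime r" "k > 0" "q = r ^ k" using pp unfolding primepow_def by blast
  have cp: "CHAR('a) > 0" by (rule finite_imp_CHAR_pos) simp
  hence pc: "prime CHAR('a)" by (rule prime_CHAR_semidom)
  have "CHAR('a) dvd r ^ (k*n)" using CHAR_dvd_CARD[where 'a='a] cardA r by (simp add: power_mult)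
  hence "CHAR('a) dvd r" using pc prime_dvd_power by blast
  hence "CHAR('a) = r" using pc r(1) primes_dvd_imp_eq by blast
  thus ?thesis using freshmans_dream'[OF pc, of q k] r by simp
qed

lemma frob_pow: "((x::'a) + y) ^ (q^i) = x ^ (q^i) + y ^ (q^i)"
proof (induction i arbitrary: x y)
  case (Suc i)
  have "(x + y) ^ (q ^ Suc i) = ((x + y) ^ q) ^ (q ^ i)" by (simp add: power_mult)
  also have "\<dots> = (x ^ q + y ^ q) ^ (q ^ i)" by (simp only: frob)
  also have "\<dots> = (x ^ q) ^ (q ^ i) + (y ^ q) ^ (q ^ i)" by (rule Suc.IH)
  also have "\<dots> = x ^ (q ^ Suc i) + y ^ (q ^ Suc i)" by (simp add: power_mult)
  finally show ?case .
qed simp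

lemma frob_sum: "finite A \<Longrightarrow> (\<Sum>i\<in>A. (g i :: 'a)) ^ q = (\<Sum>i\<in>A. g i ^ q)"
  by (induction A rule: finite_induct) (use q2 in \<open>auto simp: frob\<close>)

lemma pow_qn: "(x::'a) ^ (q^n) = x"
  using field_pow_card[of x] cardA by simp

abbreviation KK :: "'a set" where "KK \<equiv> subfield_Fq q"

lemma K0: "0 \<in> KK" using q2 by (simp add: subfield_Fq_def)
lemma K1: "1 \<in> KK" by (simp add: subfield_Fq_def)
lemma K_add: "x \<in> KK \<Longrightarrow> y \<in> KK \<Longrightarrow> x + y \<in> KK" by (simp add: subfield_Fq_def frob)
lemma K_mult: "x \<in> KK \<Longrightarrow> y \<in> KK \<Longrightarrow> x * y \<in> KK" by (simp add: subfield_Fq_def power_mult_distrib)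
lemma K_pow: "x \<in> KK \<Longrightarrow> x ^ m \<in> KK"
proof -
  assume x: "x \<in> KK"
  have "(x^m)^q = x^(m*q)" by (rule power_mult[symmetric])
  also have "m*q = q*m" by (rule mult.commute)
  also have "x^(q*m) = (x^q)^m" by (rule power_mult)
  also have "x^q = x" using x by (simp add: subfield_Fq_def)
  finally show ?thesis by (simp add: subfield_Fq_def)
qed
lemma uminus_pow: "(- (x::'a)) ^ q = - (x ^ q)"
proof -
  have "0 = (x + - x) ^ q" using q2 by simp
  also have "\<dots> = x^q + (-x)^q" by (rule frob)
  finally have "x^q + (-x)^q = 0" by (rule sym)
  thus ?thesis by (simp only: add_eq_0_iff)
qed
lemma K_uminus: "x \<in> KK \<Longrightarrow> - x \<in> KK" by (simp add: subfield_Fq_def uminus_pow)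
lemma K_diff: "x \<in> KK \<Longrightarrow> y \<in> KK \<Longrightarrow> x - y \<in> KK"
  using K_add K_uminus by (metis diff_conv_add_uminus)
lemma K_powqi: "x \<in> KK \<Longrightarrow> x ^ (q^i) = x"
proof (induction i)
  case (Suc i)
  have "x ^ (q ^ Suc i) = (x ^ q) ^ (q ^ i)" by (simp only: power_Suc power_mult)
  also have "x ^ q = x" using Suc.prems by (simp add: subfield_Fq_def)
  finally show ?case using Suc.IH Suc.prems by simp
qed simp

abbreviation Tr :: "'a \<Rightarrow> 'a" where "Tr \<equiv> trace_Fq q n"

lemma tr_add: "Tr (x + y) = Tr x + Tr y"
proof -
  have "Tr (x + y) = (\<Sum>i<n. x ^ (q^i) + y ^ (q^i))"
    unfolding trace_Fq_def by (rule sum.cong) (rule refl, rule frob_pow)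
  thus ?thesis unfolding trace_Fq_def by (simp only: sum.distrib)
qed
lemma tr_scal: "c \<in> KK \<Longrightarrow> Tr (c * x) = c * Tr x"
proof -
  assume c: "c \<in> KK"
  have "Tr (c * x) = (\<Sum>i<n. c * x ^ (q^i))"
    unfolding trace_Fq_def by (rule sum.cong) (rule refl, simp only: power_mult_distrib K_powqi[OF c])
  thus ?thesis unfolding trace_Fq_def by (simp only: sum_distrib_left)
qed
lemma tr_zero: "Tr 0 = 0"
proof -
  have "q > 0" using q2 by simp
  thus ?thesis by (simp add: trace_Fq_def power_0_left)
qed
lemma tr_sum: "finite A \<Longrightarrow> Tr (\<Sum>i\<in>A. g i) = (\<Sum>i\<in>A. Tr (g i))"
proof (induction A rule: finite_induct)
  case empty thus ?case by (simp only: sum.empty tr_zero)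
next
  case (insert x F) thus ?case by (simp add: tr_add)
qed
lemma tr_in_K: "Tr x \<in> KK"
proof -
  let ?f = "\<lambda>i. x ^ (q^i)"
  have "Tr x ^ q = (\<Sum>i<n. (x ^ (q^i)) ^ q)" unfolding trace_Fq_def by (rule frob_sum) simp
  also have "\<dots> = (\<Sum>i<n. ?f (Suc i))" by (intro sum.cong refl) (simp only: power_Suc2 power_mult)
  finally have 1: "Tr x ^ q = (\<Sum>i<n. ?f (Suc i))" .
  have 2: "(\<Sum>i<Suc n. ?f i) = ?f 0 + (\<Sum>i<n. ?f (Suc i))" by (rule sum.lessThan_Suc_shift)
  have 3: "(\<Sum>i<Suc n. ?f i) = (\<Sum>i<n. ?f i) + ?f n" by (rule sum.lessThan_Suc)
  have 4: "?f n = ?f 0" using pow_qn by simp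
  have "Tr x ^ q = Tr x" unfolding 1 unfolding trace_Fq_def using 2 3 4 by (simp add: add.commute)
  thus ?thesis by (simp add: subfield_Fq_def)
qed

lemma tr_nonzero: "\<exists>u. Tr u \<noteq> 0"
proof -
  define T :: "'a poly" where "T = (\<Sum>i<n. monom 1 (q^i))"
  have pT: "poly T x = Tr x" for x by (simp add: T_def poly_sum poly_monom trace_Fq_def)
  have cT: "coeff T j = (\<Sum>i<n. if q^i = j then 1 else 0)" for j by (simp add: T_def coeff_sum)
  have "coeff T (q^(n-1)) = (\<Sum>i\<in>{n-1}. if q^i = q^(n-1) then (1::'a) else 0)"
    unfolding cT using n1 q2 by (intro sum.mono_neutral_right) (auto simp: power_inject_exp)
  hence T0: "T \<noteq> 0" by auto
  have dT: "degree T \<le> q^(n-1)"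
  proof (rule degree_le, intro allI impI)
    fix j assume j: "q^(n-1) < j"
    have "\<forall>i<n. q^i \<noteq> j"
    proof (intro allI impI)
      fix i assume "i < n"
      hence "q^i \<le> q^(n-1)" using q2 by (intro power_increasing) auto
      thus "q^i \<noteq> j" using j by linarith
    qed
    thus "coeff T j = 0" unfolding cT by simp
  qed
  have "card {x. poly T x = 0} < card (UNIV :: 'a set)"
  proof -
    have "q^(n-1) < q^n" using q2 n1 by (intro power_strict_increasing) auto
    thus ?thesis using card_poly_roots_bound[OF T0] dT cardA by linarith
  qed
  then obtain u where "poly T u \<noteq> 0"
    by (metis (mono_tags, lifting) UNIV_eq_I less_irrefl mem_Collect_eq)
  thus ?thesis using pT by auto
qed


lemma K_fin: "finite KK" by simp

lemma K_unit: "x \<in> KK \<Longrightarrow> x \<noteq> 0 \<Longrightarrow> x ^ (q - 1) = 1"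
proof -
  assume x: "x \<in> KK" "x \<noteq> 0"
  have "x ^ (q - 1) * x = x ^ q" using q2 by (metis power_Suc2 Suc_diff_1 less_le_trans zero_less_numeral)
  also have "\<dots> = x" using x by (simp add: subfield_Fq_def)
  finally show ?thesis using x(2) by simp
qed

lemma dvd_qn: "(q - 1) dvd (q ^ n - 1)"
proof -
  have q1: "q \<ge> 1" using q2 by simp
  have "int q ^ n - 1 = (int q - 1) * (\<Sum>i<n. int q ^ i)" by (rule power_diff_1_eq)
  moreover have "int (q ^ n - 1) = int q ^ n - 1" using q1 by (simp add: of_nat_diff)
  moreover have "int (q - 1) = int q - 1" using q1 by (simp add: of_nat_diff)
  ultimately have "int (q - 1) dvd int (q ^ n - 1)" by simp
  thus ?thesis by (simp only: of_nat_dvd_iff)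
qed

lemma card_K: "card KK = q"
proof (rule antisym)
  define P :: "'a poly" where "P = monom 1 q - monom 1 1"
  have "coeff P q = 1" using q2 by (simp add: P_def)
  hence P0: "P \<noteq> 0" by auto
  have "degree P \<le> q" unfolding P_def
  proof (intro degree_diff_le)
    show "degree (monom (1::'a) q) \<le> q" by (rule degree_monom_le)
    show "degree (monom (1::'a) 1) \<le> q" using degree_monom_le[of "1::'a" 1] q2 by linarith
  qed
  moreover have "KK = {x. poly P x = 0}" by (auto simp: P_def poly_monom subfield_Fq_def)
  ultimately show "card KK \<le> q" using card_poly_roots_bound[OF P0] by simp
next
  define N where "N = q ^ n"
  define S where "S = (UNIV :: 'a set) - {0}"
  have q1: "q - 1 \<ge> 1" using q2 by simp
  have N: "N \<ge> q" unfolding N_def using n1 q2 by (simp add: self_le_power)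
  obtain e where e: "N - 1 = (q - 1) * e" using dvd_qn unfolding N_def by (auto elim: dvdE)
  have e1: "e \<ge> 1" using e N q2 by (cases e) auto
  have cS: "card S = (q - 1) * e" unfolding S_def using cardA e N_def by (simp add: card_Diff_singleton)
  have xS: "\<forall>x\<in>S. x ^ ((q - 1) * e) = 1"
  proof
    fix x assume x: "x \<in> S"
    have "x ^ (N - 1) * x = x ^ N" using N q2 by (metis power_Suc2 Suc_diff_1 le_trans zero_less_numeral less_le_trans)
    also have "\<dots> = x" unfolding N_def by (rule pow_qn)
    finally show "x ^ ((q - 1) * e) = 1" using x e unfolding S_def by simp
  qed
  have "q - 1 \<le> card {x\<in>S. x ^ (q - 1) = 1}"
    by (rule roots_lower[OF q1 e1 _ xS cS]) simp
  also have "\<dots> \<le> card (KK - {0})"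
  proof (rule card_mono)
    show "{x\<in>S. x ^ (q - 1) = 1} \<subseteq> KK - {0}"
    proof
      fix x assume x: "x \<in> {x\<in>S. x ^ (q - 1) = 1}"
      have "x ^ q = x ^ (q - 1) * x" using q2 by (metis power_Suc2 Suc_diff_1 less_le_trans zero_less_numeral)
      thus "x \<in> KK - {0}" using x unfolding S_def by (simp add: subfield_Fq_def)
    qed
  qed simp
  also have "\<dots> = card KK - 1" using K0 by (simp add: card_Diff_singleton)
  finally show "q \<le> card KK" using q2 by linarith
qed

lemma pow_inj_iff: assumes m: "m > 0" shows "inj_on (\<lambda>x. x ^ m) KK \<longleftrightarrow> coprime m (q - 1)"
proof
  assume cp: "coprime m (q - 1)"
  obtain u w where uw: "m * u = (q - 1) * w + gcd m (q - 1)" using bezout_nat[of m "q - 1"] m by auto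
  hence uw: "m * u = (q - 1) * w + 1" using cp by simp
  have bk: "t ^ (m * u) = t" if "t \<in> KK" "t \<noteq> 0" for t
  proof -
    have "t ^ (m * u) = (t ^ (q - 1)) ^ w * t" by (simp add: uw power_add power_mult)
    thus ?thesis using K_unit[OF that] by simp
  qed
  show "inj_on (\<lambda>x. x ^ m) KK"
  proof (rule inj_onI)
    fix t s assume t: "t \<in> KK" and s: "s \<in> KK" and eq: "t ^ m = s ^ m"
    show "t = s"
    proof (cases "t = 0 \<or> s = 0")
      case True
      have z: "(0::'a)^m = 0" using m by simp
      show ?thesis
      proof (cases "t = 0")
        case True
        have "s ^ m = 0" using eq z True by (simp only:)
        hence "s = 0" using m by (simp only: power_eq_0_iff)
        thus ?thesis using True by (simp only:)
      next
        case False hence s0: "s = 0" using \<open>t = 0 \<or> s = 0\<close> by (simp only: simp_thms)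
        have "t ^ m = 0" using eq z s0 by (simp only:)
        hence "t = 0" using m by (simp only: power_eq_0_iff)
        thus ?thesis using s0 by (simp only:)
      qed
    next
      case False
      hence "t = t ^ (m * u)" "s = s ^ (m * u)" using bk t s by auto
      thus ?thesis using eq by (simp add: power_mult)
    qed
  qed
next
  assume inj: "inj_on (\<lambda>x. x ^ m) KK"
  show "coprime m (q - 1)"
  proof (rule ccontr)
    assume ncp: "\<not> coprime m (q - 1)"
    define d where "d = gcd m (q - 1)"
    have d0: "d > 0" using m by (simp add: d_def)
    have d1: "d \<noteq> 1"
    proof
      assume "d = 1" hence "coprime m (q - 1)" unfolding d_def by (simp only: coprime_iff_gcd_eq_1)
      thus False using ncp by (rule notE[rotated])
    qed
    have dm: "d dvd m" and dq: "d dvd (q - 1)" by (simp_all add: d_def)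
    obtain e where e: "q - 1 = d * e" using dq by (auto elim: dvdE)
    have e1: "e \<ge> 1"
    proof (rule ccontr)
      assume "\<not> e \<ge> 1" hence "e = 0" by simp
      hence "q - 1 = 0" using e by simp
      thus False using q2 by simp
    qed
    define S where "S = KK - {0}"
    have cS: "card S = d * e" unfolding S_def using card_K K0 e by (simp add: card_Diff_singleton)
    have xS: "\<forall>x\<in>S. x ^ (d * e) = 1"
    proof
      fix x assume "x \<in> S" hence "x \<in> KK" "x \<noteq> 0" unfolding S_def by auto
      hence "x ^ (q - 1) = 1" by (rule K_unit)
      thus "x ^ (d * e) = 1" using e by (simp only:)
    qed
    have "d \<le> card {x\<in>S. x ^ d = 1}" by (rule roots_lower[OF _ e1 _ xS cS]) (use d0 in auto)
    hence "2 \<le> card {x\<in>S. x ^ d = 1}" using d0 d1 by linarith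
    have "\<not> {x\<in>S. x ^ d = 1} \<subseteq> {1}"
    proof
      assume "{x\<in>S. x ^ d = 1} \<subseteq> {1}"
      hence "card {x\<in>S. x ^ d = 1} \<le> card {1::'a}" by (intro card_mono) auto
      thus False using \<open>2 \<le> card {x\<in>S. x ^ d = 1}\<close> by simp
    qed
    then obtain x where x: "x \<in> S" "x ^ d = 1" "x \<noteq> 1" by auto
    obtain k where k: "m = d * k" using dm by (auto elim: dvdE)
    have "x ^ m = 1 ^ m" using x(2) k by (simp add: power_mult)
    moreover have "x \<in> KK" "1 \<in> KK" using x(1) K1 unfolding S_def by auto
    ultimately have "x = 1" using inj_onD[OF inj] by simp
    thus False using x(3) by simp
  qed
qed


abbreviation VV :: "(nat \<Rightarrow> 'a) set" where "VV \<equiv> PiE {1..n} (\<lambda>_. KK)"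
abbreviation LL :: "(nat \<Rightarrow> 'a) \<Rightarrow> (nat \<Rightarrow> 'a) \<Rightarrow> 'a" where "LL w t \<equiv> \<Sum>i=1..n. w i * t i"
abbreviation ev :: "nat \<Rightarrow> nat \<Rightarrow> 'a" where "ev j \<equiv> restrict (\<lambda>i. if i = j then 1 else 0) {1..n}"

lemma card_V: "card VV = card (UNIV :: 'a set)"
  by (simp add: card_PiE card_K cardA)

lemma fin_V: "finite VV"
  by (intro finite_PiE) auto

lemma ev_V: "ev j \<in> VV" using K0 K1 by auto

lemma zero_V: "restrict (\<lambda>_. 0) {1..n} \<in> VV" using K0 by auto

lemma L_ev: "j \<in> {1..n} \<Longrightarrow> LL w (ev j) = w j"
proof -
  assume j: "j \<in> {1..n}"
  have "LL w (ev j) = (\<Sum>i\<in>{1..n}. if i = j then w j else 0)" by (rule sum.cong) auto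
  also have "\<dots> = w j" using j by (simp add: sum.delta')
  finally show ?thesis .
qed

lemma basis_iff: "is_basis_over KK (w ` {1..n}) \<longleftrightarrow> bij_betw (LL w) VV UNIV"
proof
  assume B: "is_basis_over KK (w ` {1..n})"
  have yV: "y \<in> LL w ` VV" for y :: 'a
  proof -
    obtain S c where S: "finite S" "S \<subseteq> w ` {1..n}" "\<forall>s\<in>S. c s \<in> KK" "y = (\<Sum>s\<in>S. c s * s)"
      using B unfolding is_basis_over_def spans_over_def by blast
    define g where "g = inv_into {1..n} w"
    have gS: "g ` S \<subseteq> {1..n}" unfolding g_def using S(2) by (auto intro: inv_into_into)
    have wg: "\<And>s. s \<in> S \<Longrightarrow> w (g s) = s" unfolding g_def using S(2) by (auto intro: f_inv_into_f)
    have ginj: "inj_on g S" unfolding g_def using S(2) by (rule inj_on_inv_into)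
    define t where "t = restrict (\<lambda>i. if i \<in> g ` S then c (w i) else 0) {1..n}"
    have tV: "t \<in> VV" unfolding t_def using K0 S(3) wg by auto
    have gSeq: "{i\<in>{1..n}. i \<in> g ` S} = g ` S" using gS by blast
    have "LL w t = (\<Sum>i\<in>{1..n}. if i \<in> g ` S then w i * c (w i) else 0)"
      unfolding t_def by (rule sum.cong) auto
    also have "\<dots> = (\<Sum>i\<in>{i\<in>{1..n}. i \<in> g ` S}. w i * c (w i))"
      by (rule sum.inter_filter[symmetric]) simp
    also have "\<dots> = (\<Sum>i\<in>g ` S. w i * c (w i))" by (simp only: gSeq)
    also have "\<dots> = (\<Sum>s\<in>S. w (g s) * c (w (g s)))" using ginj by (simp add: sum.reindex)
    also have "\<dots> = (\<Sum>s\<in>S. c s * s)" by (rule sum.cong) (auto simp: wg mult.commute)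
    finally have "LL w t = y" using S(4) by simp
    thus "y \<in> LL w ` VV" using tV by blast
  qed
  hence "LL w ` VV = UNIV" by auto
  thus "bij_betw (LL w) VV UNIV" using fin_V card_V by (intro bij_by_card2) auto
next
  assume bij: "bij_betw (LL w) VV UNIV"
  have inj: "inj_on (LL w) VV" using bij by (simp add: bij_betw_def)
  have winj: "inj_on w {1..n}"
  proof (rule inj_onI)
    fix i j assume i: "i \<in> {1..n}" and j: "j \<in> {1..n}" and eq: "w i = w j"
    have "LL w (ev i) = LL w (ev j)" using L_ev[OF i] L_ev[OF j] eq by simp
    hence "ev i = ev j" using inj ev_V by (blast dest: inj_onD)
    hence "ev i i = ev j i" by simp
    thus "i = j" using i by (auto split: if_splits)
  qed
  have LI: "lin_indep_over KK (w ` {1..n})"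
    unfolding lin_indep_over_def
  proof (intro allI impI)
    fix S c assume H: "finite S \<and> S \<subseteq> w ` {1..n} \<and> (\<forall>s\<in>S. c s \<in> KK) \<and> (\<Sum>s\<in>S. c s * s) = 0"
    define A where "A = {i\<in>{1..n}. w i \<in> S}"
    have wA: "w ` A = S" using H unfolding A_def by auto
    have Ainj: "inj_on w A" using winj unfolding A_def by (rule inj_on_subset) auto
    define t where "t = restrict (\<lambda>i. if w i \<in> S then c (w i) else 0) {1..n}"
    have tV: "t \<in> VV" unfolding t_def using K0 H by auto
    have "LL w t = (\<Sum>i\<in>{1..n}. if w i \<in> S then w i * c (w i) else 0)"
      unfolding t_def by (rule sum.cong) auto
    also have "\<dots> = (\<Sum>i\<in>A. w i * c (w i))"
      unfolding A_def by (rule sum.inter_filter[symmetric]) simp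
    also have "\<dots> = (\<Sum>s\<in>w ` A. s * c s)" using Ainj by (simp add: sum.reindex)
    also have "\<dots> = 0" using wA H by (simp add: mult.commute)
    finally have "LL w t = LL w (restrict (\<lambda>_. 0) {1..n})" by simp
    hence tz: "t = restrict (\<lambda>_. 0) {1..n}" using inj tV zero_V by (blast dest: inj_onD)
    show "\<forall>s\<in>S. c s = 0"
    proof
      fix s assume s: "s \<in> S"
      then obtain i where i: "i \<in> {1..n}" "s = w i" using H by auto
      have "t i = 0" using tz i by simp
      thus "c s = 0" unfolding t_def using i s by simp
    qed
  qed
  have SP: "spans_over KK (w ` {1..n})"
    unfolding spans_over_def
  proof
    fix y :: 'a
    have "LL w ` VV = UNIV" using bij by (rule bij_betw_imp_surj_on)
    hence "y \<in> LL w ` VV" by simp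
    then obtain t where t: "t \<in> VV" "LL w t = y" by (rule imageE) simp
    define c where "c = (\<lambda>s. t (inv_into {1..n} w s))"
    have cK: "\<forall>s\<in>w ` {1..n}. c s \<in> KK"
    proof
      fix s assume "s \<in> w ` {1..n}"
      then obtain i where i: "i \<in> {1..n}" "s = w i" by blast
      have "c s = t i" unfolding c_def i(2) using inv_into_f_f[OF winj i(1)] by simp
      thus "c s \<in> KK" using t(1) i(1) by auto
    qed
    have "(\<Sum>s\<in>w ` {1..n}. c s * s) = (\<Sum>i\<in>{1..n}. c (w i) * w i)" using winj by (simp add: sum.reindex)
    also have "\<dots> = (\<Sum>i\<in>{1..n}. w i * t i)"
    proof (rule sum.cong)
      fix i assume i: "i \<in> {1..n}"
      have "c (w i) = t i" unfolding c_def using inv_into_f_f[OF winj i] by simp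
      thus "c (w i) * w i = w i * t i" by (simp only: mult.commute)
    qed simp
    also have "\<dots> = y" using t(2) by simp
    finally show "\<exists>S c. finite S \<and> S \<subseteq> w ` {1..n} \<and> (\<forall>s\<in>S. c s \<in> KK) \<and> y = (\<Sum>s\<in>S. c s * s)"
      using cK by (intro exI[of _ "w ` {1..n}"] exI[of _ c]) auto
  qed
  show "is_basis_over KK (w ` {1..n})" using LI SP by (simp add: is_basis_over_def)
qed


abbreviation TT :: "(nat \<Rightarrow> 'a) \<Rightarrow> 'a \<Rightarrow> nat \<Rightarrow> 'a" where
  "TT v y \<equiv> restrict (\<lambda>i. Tr (v i * y)) {1..n}"

lemma T_V: "TT v y \<in> VV" using tr_in_K by auto

lemma tr_L: "t \<in> VV \<Longrightarrow> Tr (LL v t * z) = (\<Sum>i=1..n. t i * Tr (v i * z))"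
proof -
  assume t: "t \<in> VV"
  have "LL v t * z = (\<Sum>i=1..n. v i * t i * z)" by (rule sum_distrib_right)
  also have "\<dots> = (\<Sum>i=1..n. t i * (v i * z))" by (rule sum.cong) (simp_all only: mult_ac)
  finally have "LL v t * z = (\<Sum>i=1..n. t i * (v i * z))" .
  hence "Tr (LL v t * z) = (\<Sum>i=1..n. Tr (t i * (v i * z)))" by (simp add: tr_sum)
  also have "\<dots> = (\<Sum>i=1..n. t i * Tr (v i * z))"
  proof (rule sum.cong)
    fix i assume "i \<in> {1..n}" hence "t i \<in> KK" using t by auto
    thus "Tr (t i * (v i * z)) = t i * Tr (v i * z)" by (rule tr_scal)
  qed simp
  finally show ?thesis .
qed

lemma T_iff: "bij_betw (TT v) UNIV VV \<longleftrightarrow> bij_betw (LL v) VV UNIV"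
proof
  assume bij: "bij_betw (LL v) VV UNIV"
  have surj: "LL v ` VV = UNIV" using bij by (rule bij_betw_imp_surj_on)
  have inj: "inj (TT v)"
  proof (rule injI)
    fix y y' assume eq: "TT v y = TT v y'"
    define z where "z = y - y'"
    have zero: "Tr (v i * z) = 0" if i: "i \<in> {1..n}" for i
    proof -
      have "Tr (v i * y) = Tr (v i * y')" using fun_cong[OF eq, of i] i by simp
      moreover have "Tr (v i * y) = Tr (v i * z) + Tr (v i * y')"
        unfolding z_def by (simp only: tr_add[symmetric] ring_distribs diff_add_cancel)
      ultimately show ?thesis by simp
    qed
    show "y = y'"
    proof (rule ccontr)
      assume "y \<noteq> y'" hence z0: "z \<noteq> 0" unfolding z_def by simp
      obtain u where u: "Tr u \<noteq> 0" using tr_nonzero by blast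
      have "u / z \<in> LL v ` VV" using surj by simp
      then obtain t where t: "t \<in> VV" "LL v t = u / z" by (rule imageE) simp
      have "u = LL v t * z" using t(2) z0 by simp
      hence "Tr u = (\<Sum>i=1..n. t i * Tr (v i * z))" using tr_L[OF t(1)] by simp
      also have "\<dots> = 0" using zero by simp
      finally show False using u by simp
    qed
  qed
  show "bij_betw (TT v) UNIV VV"
  proof (rule bij_by_card[OF fin_V inj])
    show "range (TT v) \<subseteq> VV" using T_V by blast
    show "card (UNIV :: 'a set) = card VV" using card_V by simp
  qed
next
  assume bij: "bij_betw (TT v) UNIV VV"
  have surj: "TT v ` UNIV = VV" using bij by (rule bij_betw_imp_surj_on)
  have inj: "inj_on (LL v) VV"
  proof (rule inj_onI)
    fix t t' assume t: "t \<in> VV" and t': "t' \<in> VV" and eq: "LL v t = LL v t'"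
    have coord: "Tr (LL v s * y) = s j" if s: "s \<in> VV" and j: "j \<in> {1..n}" and y: "TT v y = ev j" for s y j
    proof -
      have "Tr (LL v s * y) = (\<Sum>i=1..n. s i * Tr (v i * y))" by (rule tr_L[OF s])
      also have "\<dots> = (\<Sum>i=1..n. s i * ev j i)"
      proof (rule sum.cong)
        fix i assume i: "i \<in> {1..n}"
        have "Tr (v i * y) = ev j i" using fun_cong[OF y, of i] i by simp
        thus "s i * Tr (v i * y) = s i * ev j i" by simp
      qed simp
      also have "\<dots> = (\<Sum>i\<in>{1..n}. if i = j then s j else 0)" by (rule sum.cong) auto
      also have "\<dots> = s j" using j by (simp add: sum.delta')
      finally show ?thesis .
    qed
    show "t = t'"
    proof (rule PiE_ext[OF t t'])
      fix j assume j: "j \<in> {1..n}"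
      have "ev j \<in> TT v ` UNIV" using surj ev_V by simp
      then obtain y where y0: "ev j = TT v y" and "y \<in> UNIV" by (rule imageE)
      from y0 have y: "TT v y = ev j" by (rule sym)
      show "t j = t' j" using coord[OF t j y] coord[OF t' j y] eq by simp
    qed
  qed
  show "bij_betw (LL v) VV UNIV"
  proof (rule bij_by_card[OF _ inj])
    show "card VV = card (UNIV :: 'a set)" by (rule card_V)
  qed simp_all
qed

abbreviation PP :: "(nat \<Rightarrow> nat) \<Rightarrow> (nat \<Rightarrow> 'a) \<Rightarrow> nat \<Rightarrow> 'a" where
  "PP m t \<equiv> restrict (\<lambda>i. t i ^ m i) {1..n}"

lemma P_V: "t \<in> VV \<Longrightarrow> PP m t \<in> VV" using K_pow by auto

lemma P_inj_iff: "inj_on (PP m) VV \<longleftrightarrow> (\<forall>i\<in>{1..n}. inj_on (\<lambda>x. x ^ m i) KK)"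
proof
  assume inj: "inj_on (PP m) VV"
  show "\<forall>i\<in>{1..n}. inj_on (\<lambda>x. x ^ m i) KK"
  proof (intro ballI inj_onI)
    fix i x y assume i: "i \<in> {1..n}" and x: "x \<in> KK" and y: "y \<in> KK" and eq: "x ^ m i = y ^ m i"
    define ex where "ex = restrict (\<lambda>j. if j = i then x else 0) {1..n}"
    define ey where "ey = restrict (\<lambda>j. if j = i then y else 0) {1..n}"
    have V: "ex \<in> VV" "ey \<in> VV" unfolding ex_def ey_def using x y K0 by auto
    have "PP m ex = PP m ey" unfolding ex_def ey_def using eq by (intro ext) auto
    hence "ex = ey" using inj V by (blast dest: inj_onD)
    hence "ex i = ey i" by simp
    thus "x = y" unfolding ex_def ey_def using i by simp
  qed
next
  assume H: "\<forall>i\<in>{1..n}. inj_on (\<lambda>x. x ^ m i) KK"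
  show "inj_on (PP m) VV"
  proof (rule inj_onI)
    fix t t' assume t: "t \<in> VV" and t': "t' \<in> VV" and eq: "PP m t = PP m t'"
    show "t = t'"
    proof (rule PiE_ext[OF t t'])
      fix j assume j: "j \<in> {1..n}"
      have "t j ^ m j = t' j ^ m j" using fun_cong[OF eq, of j] j by simp
      moreover have "t j \<in> KK" "t' j \<in> KK" using t t' j by auto
      ultimately show "t j = t' j" using H j by (blast dest: inj_onD)
    qed
  qed
qed


lemma comp_iff:
  "bij (\<lambda>y. LL a (PP m (TT v y))) \<longleftrightarrow>
     (bij_betw (TT v) UNIV VV \<and> inj_on (PP m) VV \<and> bij_betw (LL a) VV UNIV)"
proof
  assume H: "bij_betw (TT v) UNIV VV \<and> inj_on (PP m) VV \<and> bij_betw (LL a) VV UNIV"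
  have P: "bij_betw (PP m) VV VV"
  proof (rule bij_by_card[OF fin_V])
    show "inj_on (PP m) VV" using H by simp
    show "PP m ` VV \<subseteq> VV" using P_V by blast
  qed simp
  have "bij_betw (PP m \<circ> TT v) UNIV VV" using H P by (blast intro: bij_betw_trans)
  hence "bij_betw (LL a \<circ> (PP m \<circ> TT v)) UNIV UNIV" using H by (blast intro: bij_betw_trans)
  moreover have "LL a \<circ> (PP m \<circ> TT v) = (\<lambda>y. LL a (PP m (TT v y)))" by (simp add: comp_def)
  ultimately show "bij (\<lambda>y. LL a (PP m (TT v y)))" by simp
next
  assume B: "bij (\<lambda>y. LL a (PP m (TT v y)))"
  have G: "(\<lambda>y. LL a (PP m (TT v y))) = (LL a \<circ> PP m) \<circ> TT v" by (simp add: comp_def)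
  have injG: "inj_on ((LL a \<circ> PP m) \<circ> TT v) UNIV" using B G by (simp add: bij_def)
  have injT: "inj (TT v)" using injG by (rule inj_on_imageI2)
  have bT: "bij_betw (TT v) UNIV VV"
  proof (rule bij_by_card[OF fin_V injT])
    show "range (TT v) \<subseteq> VV" using T_V by blast
    show "card (UNIV :: 'a set) = card VV" using card_V by simp
  qed
  have imT: "TT v ` UNIV = VV" using bT by (rule bij_betw_imp_surj_on)
  have "inj_on (LL a \<circ> PP m) (TT v ` UNIV)" by (rule iffD2[OF comp_inj_on_iff[OF injT] injG])
  hence injLP: "inj_on (LL a \<circ> PP m) VV" using imT by simp
  have injP: "inj_on (PP m) VV" using injLP by (rule inj_on_imageI2)
  have bP: "bij_betw (PP m) VV VV"
  proof (rule bij_by_card[OF fin_V injP])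
    show "PP m ` VV \<subseteq> VV" using P_V by blast
  qed simp
  have imP: "PP m ` VV = VV" using bP by (rule bij_betw_imp_surj_on)
  have "inj_on (LL a) (PP m ` VV)" by (rule iffD2[OF comp_inj_on_iff[OF injP] injLP])
  hence injL: "inj_on (LL a) VV" using imP by simp
  have bL: "bij_betw (LL a) VV UNIV"
  proof (rule bij_by_card[OF _ injL])
    show "card VV = card (UNIV :: 'a set)" by (rule card_V)
  qed simp_all
  show "bij_betw (TT v) UNIV VV \<and> inj_on (PP m) VV \<and> bij_betw (LL a) VV UNIV"
    using bT injP bL by simp
qed

lemma main_ctx:
  fixes f :: "'a poly"
  assumes bf: "bij (poly f)" and mpos: "\<forall>i\<in>{1..n}. m i > 0"
  shows "bij (\<lambda>x. \<Sum>i=1..n. a i * (trace_Fq q n (v i * poly f x)) ^ m i) \<longleftrightarrow>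
         (gcd (\<Prod>i=1..n. m i) (q - 1) = 1
          \<and> is_basis_over (subfield_Fq q) (a ` {1..n})
          \<and> is_basis_over (subfield_Fq q) (v ` {1..n}))"
proof -
  have eqF: "(\<lambda>x. \<Sum>i=1..n. a i * (trace_Fq q n (v i * poly f x)) ^ m i)
      = (\<lambda>y. LL a (PP m (TT v y))) \<circ> poly f"
    by (rule ext) (auto simp: comp_def intro!: sum.cong)
  have "bij (\<lambda>x. \<Sum>i=1..n. a i * (trace_Fq q n (v i * poly f x)) ^ m i)
      \<longleftrightarrow> bij (\<lambda>y. LL a (PP m (TT v y)))"
    unfolding eqF by (rule bij_betw_comp_iff[OF bf, symmetric])
  also have "\<dots> \<longleftrightarrow> (bij_betw (TT v) UNIV VV \<and> inj_on (PP m) VV \<and> bij_betw (LL a) VV UNIV)"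
    by (rule comp_iff)
  also have "bij_betw (TT v) UNIV VV \<longleftrightarrow> is_basis_over KK (v ` {1..n})"
    using T_iff basis_iff by simp
  also have "bij_betw (LL a) VV UNIV \<longleftrightarrow> is_basis_over KK (a ` {1..n})"
    using basis_iff by simp
  also have "inj_on (PP m) VV \<longleftrightarrow> (\<forall>i\<in>{1..n}. coprime (m i) (q - 1))"
    using P_inj_iff pow_inj_iff mpos by simp
  also have "(\<forall>i\<in>{1..n}. coprime (m i) (q - 1)) \<longleftrightarrow> gcd (\<Prod>i=1..n. m i) (q - 1) = 1"
  proof
    assume "\<forall>i\<in>{1..n}. coprime (m i) (q - 1)"
    hence "coprime (\<Prod>i=1..n. m i) (q - 1)" by (intro prod_coprime_left) auto
    thus "gcd (\<Prod>i=1..n. m i) (q - 1) = 1" by (simp only: coprime_iff_gcd_eq_1)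
  next
    assume "gcd (\<Prod>i=1..n. m i) (q - 1) = 1"
    hence c: "coprime (\<Prod>i=1..n. m i) (q - 1)" by (simp only: coprime_iff_gcd_eq_1)
    show "\<forall>i\<in>{1..n}. coprime (m i) (q - 1)"
    proof
      fix i assume i: "i \<in> {1..n}"
      have "(\<Prod>i=1..n. m i) = m i * (\<Prod>j\<in>{1..n} - {i}. m j)" using i by (simp add: prod.remove)
      thus "coprime (m i) (q - 1)" using c by simp
    qed
  qed
  finally show ?thesis by (simp only: conj_ac)
qed

end

theorem mainTheorem8:
  fixes q n :: nat
    and f :: "'a::{field,finite} poly"
    and m :: "nat \<Rightarrow> nat"
    and a v :: "nat \<Rightarrow> 'a"
  assumes "primepow q"
    and "n \<ge> 1"
    and "card (UNIV :: 'a set) = q ^ n"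
    and "bij (poly f)"
    and "\<forall>i\<in>{1..n}. m i > 0"
  shows "bij (\<lambda>x. \<Sum>i=1..n. a i * (trace_Fq q n (v i * poly f x)) ^ m i) \<longleftrightarrow>
         (gcd (\<Prod>i=1..n. m i) (q - 1) = 1
          \<and> is_basis_over (subfield_Fq q) (a ` {1..n})
          \<and> is_basis_over (subfield_Fq q) (v ` {1..n}))"
  by (rule main_ctx[OF assms])

end
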